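(* Let $n\ge1$, $L,G>0$ and $\eta>0$ with $\eta L\le 1$. Let $a_1,\dots,a_n\in[0,L]$ and $b_1,\dots,b_n\in[-G,G]$ with $\sum_{i=1}^nb_i=0$. For a permutation $\sigma$ of $\{1,\dots,n\}$ define \[ X_\sigma=\sum_{j=1}^n\left(\prod_{i=j+1}^n(1-\eta a_{\sigma(i)})\right)b_{\sigma(j)} \] (an empty product equals $1$). If $\sigma$ is a uniformly random permutation, then \[ \mathbb{E}_\sigma\big[X_\sigma^2\big]\;\le\;5\eta^2n^3L^2G^2\log(2n). \] *)

theory Defs
  imports "HOL-Analysis.Analysis" "HOL-Combinatorics.Permutations"
begin

definition X_perm :: "nat \<Rightarrow> real \<Rightarrow> (nat \<Rightarrow> real) \<Rightarrow> (nat \<Rightarrow> real) \<Rightarrow> (nat \<Rightarrow> nat) \<Rightarrow> real" where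
  "X_perm n \<eta> a b \<sigma> =
     (\<Sum>j = 1..n. (\<Prod>i = j+1..n. (1 - \<eta> * a (\<sigma> i))) * b (\<sigma> j))"

definition perm_expect :: "nat \<Rightarrow> ((nat \<Rightarrow> nat) \<Rightarrow> real) \<Rightarrow> real" where
  "perm_expect n F =
     (\<Sum>\<sigma> \<in> {\<sigma>. \<sigma> permutes {1..n}}. F \<sigma>) / real (card {\<sigma>. \<sigma> permutes {1..n}})"

end

theory Submission
  imports Defs
begin

lemma abel_aux:
  fixes c \<beta> :: "nat \<Rightarrow> real"
  assumes "k \<le> m+1"
  shows "(\<Sum>j=k..m. (\<Prod>i=j+1..m. 1 - c i) * \<beta> j)
    = (\<Prod>i=k..m. 1 - c i) * (\<Sum>j=k..m. \<beta> j)
      + (\<Sum>i=k..m. c i * (\<Prod>l=i+1..m. 1 - c l) * (\<Sum>j=i..m. \<beta> j))"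
  using assms
proof (induction k rule: inc_induct)
  case base
  then show ?case by simp
next
  case (step k)
  have km: "k \<le> m" using step by simp
  have e1: "(\<Sum>j=k..m. (\<Prod>i=j+1..m. 1 - c i) * \<beta> j)
     = (\<Prod>i=k+1..m. 1 - c i) * \<beta> k + (\<Sum>j=Suc k..m. (\<Prod>i=j+1..m. 1 - c i) * \<beta> j)"
    using km by (simp add: sum.atLeast_Suc_atMost)
  have e2: "(\<Prod>i=k..m. 1 - c i) = (1 - c k) * (\<Prod>i=Suc k..m. 1 - c i)"
    using km by (simp add: prod.atLeast_Suc_atMost)
  have e3: "(\<Sum>j=k..m. \<beta> j) = \<beta> k + (\<Sum>j=Suc k..m. \<beta> j)"
    using km by (simp add: sum.atLeast_Suc_atMost)
  have e4: "(\<Sum>i=k..m. c i * (\<Prod>l=i+1..m. 1 - c l) * (\<Sum>j=i..m. \<beta> j))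
     = c k * (\<Prod>l=k+1..m. 1 - c l) * (\<Sum>j=k..m. \<beta> j) +
       (\<Sum>i=Suc k..m. c i * (\<Prod>l=i+1..m. 1 - c l) * (\<Sum>j=i..m. \<beta> j))"
    using km by (simp add: sum.atLeast_Suc_atMost)
  have IH: "(\<Sum>j=Suc k..m. (\<Prod>i=j+1..m. 1 - c i) * \<beta> j)
    = (\<Prod>i=Suc k..m. 1 - c i) * (\<Sum>j=Suc k..m. \<beta> j)
      + (\<Sum>i=Suc k..m. c i * (\<Prod>l=i+1..m. 1 - c l) * (\<Sum>j=i..m. \<beta> j))"
    using step.IH by simp
  show ?case unfolding e1 e2 e4 e3 IH
    by (simp add: algebra_simps)
qed

lemma perm_offdiag:
  fixes b :: "nat \<Rightarrow> real"
  assumes "j \<in> {1..n}" "k \<in> {1..n}" "j \<noteq> k" and sb: "(\<Sum>i = 1..n. b i) = 0"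
  shows "(\<Sum>\<sigma>\<in>{\<sigma>. \<sigma> permutes {1..n}}. b (\<sigma> j) * b (\<sigma> k)) \<le> 0"
proof -
  let ?P = "{\<sigma>. \<sigma> permutes {1..(n::nat)}}"
  let ?T = "(\<Sum>\<sigma>\<in>?P. b (\<sigma> j) * b (\<sigma> k))"
  let ?K = "{1..n} - {j}"
  have eq: "(\<Sum>\<sigma>\<in>?P. b (\<sigma> j) * b (\<sigma> k')) = ?T" if k': "k' \<in> ?K" for k'
  proof -
    have tp: "Transposition.transpose k k' permutes {1..n}" using k' assms by (intro permutes_swap_id) auto
    have "?T = (\<Sum>\<sigma>\<in>?P. b ((\<sigma> \<circ> Transposition.transpose k k') j) * b ((\<sigma> \<circ> Transposition.transpose k k') k))"
      by (rule sum_permutations_compose_right[OF tp])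
    also have "\<dots> = (\<Sum>\<sigma>\<in>?P. b (\<sigma> j) * b (\<sigma> k'))"
      using k' assms by (simp add: Transposition.transpose_def)
    finally show ?thesis by simp
  qed
  have "real (card ?K) * ?T = (\<Sum>k'\<in>?K. \<Sum>\<sigma>\<in>?P. b (\<sigma> j) * b (\<sigma> k'))"
    using eq by simp
  also have "\<dots> = (\<Sum>\<sigma>\<in>?P. \<Sum>k'\<in>?K. b (\<sigma> j) * b (\<sigma> k'))"
    by (rule sum.swap)
  also have "\<dots> = (\<Sum>\<sigma>\<in>?P. b (\<sigma> j) * (\<Sum>k'\<in>?K. b (\<sigma> k')))"
    by (simp add: sum_distrib_left)
  also have "\<dots> = (\<Sum>\<sigma>\<in>?P. - ((b (\<sigma> j))^2))"
  proof (rule sum.cong[OF refl])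
    fix \<sigma> assume "\<sigma> \<in> ?P"
    hence p: "\<sigma> permutes {1..n}" by simp
    have "(\<Sum>k'\<in>{1..n}. b (\<sigma> k')) = 0"
      using sum.permute[OF p, of b] sb by (simp add: comp_def)
    hence "(\<Sum>k'\<in>?K. b (\<sigma> k')) = - b (\<sigma> j)"
      using assms(1) by (simp add: sum_diff1)
    thus "b (\<sigma> j) * (\<Sum>k'\<in>?K. b (\<sigma> k')) = - ((b (\<sigma> j))^2)"
      by (simp add: power2_eq_square)
  qed
  also have "\<dots> \<le> 0" by (intro sum_nonpos) simp
  finally have "real (card ?K) * ?T \<le> 0" .
  moreover have "real (card ?K) > 0"
  proof -
    have "k \<in> ?K" using assms by auto
    hence "?K \<noteq> {}" by blast
    thus ?thesis by (simp add: card_gt_0_iff)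
  qed
  ultimately show ?thesis
    by (meson not_le mult_pos_pos)
qed


lemma perm_sq:
  fixes b :: "nat \<Rightarrow> real"
  assumes sb: "(\<Sum>i = 1..n. b i) = 0" and bd: "\<forall>i\<in>{1..n}. -G \<le> b i \<and> b i \<le> G"
    and G: "G \<ge> 0" and J: "J \<subseteq> {1..n}"
  shows "(\<Sum>\<sigma>\<in>{\<sigma>. \<sigma> permutes {1..n}}. (\<Sum>i\<in>J. b (\<sigma> i))^2)
     \<le> real (card {\<sigma>. \<sigma> permutes {1..n}}) * real (card J) * G^2"
proof -
  let ?P = "{\<sigma>. \<sigma> permutes {1..(n::nat)}}"
  have finJ: "finite J" by (rule finite_subset[OF J]) simp
  have "(\<Sum>\<sigma>\<in>?P. (\<Sum>i\<in>J. b (\<sigma> i))^2) = (\<Sum>\<sigma>\<in>?P. \<Sum>i\<in>J. \<Sum>k\<in>J. b (\<sigma> i) * b (\<sigma> k))"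
    by (simp add: power2_eq_square sum_product)
  also have "\<dots> = (\<Sum>i\<in>J. \<Sum>\<sigma>\<in>?P. \<Sum>k\<in>J. b (\<sigma> i) * b (\<sigma> k))"
    by (rule sum.swap)
  also have "\<dots> = (\<Sum>i\<in>J. \<Sum>k\<in>J. \<Sum>\<sigma>\<in>?P. b (\<sigma> i) * b (\<sigma> k))"
    by (rule sum.cong[OF refl], rule sum.swap)
  also have "\<dots> \<le> (\<Sum>i\<in>J. real (card ?P) * G^2)"
  proof (rule sum_mono)
    fix i assume i: "i \<in> J"
    have split: "(\<Sum>k\<in>J. \<Sum>\<sigma>\<in>?P. b (\<sigma> i) * b (\<sigma> k))
       = (\<Sum>\<sigma>\<in>?P. b (\<sigma> i) * b (\<sigma> i)) + (\<Sum>k\<in>J-{i}. \<Sum>\<sigma>\<in>?P. b (\<sigma> i) * b (\<sigma> k))"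
      by (rule sum.remove[OF finJ i])
    have off: "(\<Sum>k\<in>J-{i}. \<Sum>\<sigma>\<in>?P. b (\<sigma> i) * b (\<sigma> k)) \<le> 0"
    proof (rule sum_nonpos)
      fix k assume k: "k \<in> J - {i}"
      show "(\<Sum>\<sigma>\<in>?P. b (\<sigma> i) * b (\<sigma> k)) \<le> 0"
        by (rule perm_offdiag) (use i k J sb in auto)
    qed
    have diag: "(\<Sum>\<sigma>\<in>?P. b (\<sigma> i) * b (\<sigma> i)) \<le> (\<Sum>\<sigma>\<in>?P. G^2)"
    proof (rule sum_mono)
      fix \<sigma> assume "\<sigma> \<in> ?P"
      hence p: "\<sigma> permutes {1..n}" by simp
      have iS: "i \<in> {1..n}" using i J by blast
      hence "\<sigma> i \<in> {1..n}" using permutes_in_image[OF p] by simp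
      hence "-G \<le> b (\<sigma> i) \<and> b (\<sigma> i) \<le> G" using bd by blast
      hence "\<bar>b (\<sigma> i)\<bar> \<le> \<bar>G\<bar>" using G by linarith
      hence "(b (\<sigma> i))^2 \<le> G^2" by (simp only: abs_le_square_iff)
      thus "b (\<sigma> i) * b (\<sigma> i) \<le> G^2" by (simp add: power2_eq_square)
    qed
    have "(\<Sum>\<sigma>\<in>?P. G^2) = real (card ?P) * G^2" by simp
    thus "(\<Sum>k\<in>J. \<Sum>\<sigma>\<in>?P. b (\<sigma> i) * b (\<sigma> k)) \<le> real (card ?P) * G^2"
      using split off diag by linarith
  qed
  also have "\<dots> = real (card ?P) * real (card J) * G^2" by simp
  finally show ?thesis .
qed

theorem lemma7:
  fixes n :: nat and L G \<eta> :: real and a b :: "nat \<Rightarrow> real"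
  assumes "n \<ge> 1" and "L > 0" and "G > 0" and "\<eta> > 0" and "\<eta> * L \<le> 1"
    and "\<forall>i\<in>{1..n}. 0 \<le> a i \<and> a i \<le> L"
    and "\<forall>i\<in>{1..n}. -G \<le> b i \<and> b i \<le> G"
    and "(\<Sum>i = 1..n. b i) = 0"
  shows "perm_expect n (\<lambda>\<sigma>. (X_perm n \<eta> a b \<sigma>)^2)
           \<le> 5 * \<eta>^2 * real n ^ 3 * L^2 * G^2 * ln (2 * real n)"
proof -
  note n = assms(1) and L = assms(2) and G = assms(3) and eta = assms(4) and eL = assms(5)
    and ab = assms(6) and bb = assms(7) and sb = assms(8)
  let ?P = "{\<sigma>. \<sigma> permutes {1..(n::nat)}}"
  define S where "S \<sigma> i = (\<Sum>j=i..n. b (\<sigma> j))" for \<sigma> :: "nat \<Rightarrow> nat" and i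
  have finP: "finite ?P" by (rule finite_permutations) simp
  have Pne: "?P \<noteq> {}" using permutes_id[of "{1..n}"] by blast
  have Npos: "real (card ?P) > 0" using finP Pne by (simp add: card_gt_0_iff)
  have pw: "(X_perm n \<eta> a b \<sigma>)^2 \<le> (\<eta> * L)^2 * real n * (\<Sum>i=1..n. (S \<sigma> i)^2)"
    if \<sigma>: "\<sigma> \<in> ?P" for \<sigma>
  proof -
    have p: "\<sigma> permutes {1..n}" using \<sigma> by simp
    have inr: "\<sigma> i \<in> {1..n}" if "i \<in> {1..n}" for i using permutes_in_image[OF p] that by simp
    define c where "c i = \<eta> * a (\<sigma> i)" for i
    have c0: "0 \<le> c i" and cL: "c i \<le> \<eta> * L" if "i \<in> {1..n}" for i
      using inr[OF that] ab eta by (auto simp: c_def intro!: mult_left_mono)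
    have Q01: "0 \<le> (\<Prod>l=i+1..n. 1 - c l) \<and> (\<Prod>l=i+1..n. 1 - c l) \<le> 1" for i
    proof -
      have "\<forall>l\<in>{i+1..n}. 0 \<le> 1 - c l \<and> 1 - c l \<le> 1"
      proof
        fix l assume "l \<in> {i+1..n}"
        hence l: "l \<in> {1..n}" by simp
        show "0 \<le> 1 - c l \<and> 1 - c l \<le> 1" using c0[OF l] cL[OF l] eL by linarith
      qed
      thus ?thesis by (auto intro!: prod_nonneg prod_le_1)
    qed
    have S1: "S \<sigma> 1 = 0"
      using sum.permute[OF p, of b] sb by (simp add: S_def comp_def)
    have X: "X_perm n \<eta> a b \<sigma> = (\<Sum>i=1..n. c i * (\<Prod>l=i+1..n. 1 - c l) * S \<sigma> i)"
      using abel_aux[of 1 n c "\<lambda>j. b (\<sigma> j)"] S1 by (simp add: X_perm_def c_def S_def)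
    have "\<bar>X_perm n \<eta> a b \<sigma>\<bar> \<le> (\<Sum>i=1..n. \<bar>c i * (\<Prod>l=i+1..n. 1 - c l) * S \<sigma> i\<bar>)"
      unfolding X by (rule sum_abs)
    also have "\<dots> \<le> (\<Sum>i=1..n. \<eta> * L * \<bar>S \<sigma> i\<bar>)"
    proof (rule sum_mono)
      fix i assume i: "i \<in> {1..n}"
      have "\<bar>c i * (\<Prod>l=i+1..n. 1 - c l)\<bar> \<le> \<eta> * L"
        using c0[OF i] cL[OF i] Q01[of i]
        by (simp add: abs_mult) (smt (verit) mult_left_le mult_nonneg_nonneg)
      thus "\<bar>c i * (\<Prod>l=i+1..n. 1 - c l) * S \<sigma> i\<bar> \<le> \<eta> * L * \<bar>S \<sigma> i\<bar>"
        by (simp add: abs_mult mult_right_mono)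
    qed
    also have "\<dots> = \<eta> * L * (\<Sum>i=1..n. \<bar>S \<sigma> i\<bar>)" by (simp add: sum_distrib_left)
    finally have ab1: "\<bar>X_perm n \<eta> a b \<sigma>\<bar> \<le> \<eta> * L * (\<Sum>i=1..n. \<bar>S \<sigma> i\<bar>)" .
    have "(X_perm n \<eta> a b \<sigma>)^2 = \<bar>X_perm n \<eta> a b \<sigma>\<bar>^2" by simp
    also have "\<dots> \<le> (\<eta> * L * (\<Sum>i=1..n. \<bar>S \<sigma> i\<bar>))^2"
      by (rule power_mono[OF ab1 abs_ge_zero])
    also have "\<dots> = (\<eta> * L)^2 * (\<Sum>i=1..n. \<bar>S \<sigma> i\<bar>)^2" by (simp add: power_mult_distrib)
    also have "\<dots> \<le> (\<eta> * L)^2 * ((\<Sum>i=1..n. \<bar>S \<sigma> i\<bar>^2) * real n)"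
      using sum_squared_le_sum_of_squares[of "\<lambda>i. \<bar>S \<sigma> i\<bar>" "{1..n}"]
      by (intro mult_left_mono) auto
    finally show ?thesis by (simp add: mult_ac)
  qed
  have "(\<Sum>\<sigma>\<in>?P. (X_perm n \<eta> a b \<sigma>)^2) \<le> (\<Sum>\<sigma>\<in>?P. (\<eta> * L)^2 * real n * (\<Sum>i=1..n. (S \<sigma> i)^2))"
    by (rule sum_mono) (rule pw)
  also have "\<dots> = (\<eta> * L)^2 * real n * (\<Sum>i=1..n. \<Sum>\<sigma>\<in>?P. (S \<sigma> i)^2)"
    unfolding sum_distrib_left by (rule sum.swap)
  also have "\<dots> \<le> (\<eta> * L)^2 * real n * (\<Sum>i=1..n. real (card ?P) * real n * G^2)"
  proof (intro mult_left_mono sum_mono)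
    fix i assume i: "i \<in> {1..n}"
    have "(\<Sum>\<sigma>\<in>?P. (S \<sigma> i)^2) \<le> real (card ?P) * real (card {i..n}) * G^2"
      unfolding S_def by (rule perm_sq) (use sb bb G i in auto)
    also have "\<dots> \<le> real (card ?P) * real n * G^2"
      using Npos i by (intro mult_right_mono mult_left_mono) auto
    finally show "(\<Sum>\<sigma>\<in>?P. (S \<sigma> i)^2) \<le> real (card ?P) * real n * G^2" .
  qed auto
  also have "\<dots> = real (card ?P) * ((\<eta> * L)^2 * real n ^ 3 * G^2)"
    by (simp add: power3_eq_cube power_mult_distrib)
  finally have T: "(\<Sum>\<sigma>\<in>?P. (X_perm n \<eta> a b \<sigma>)^2) \<le> real (card ?P) * ((\<eta> * L)^2 * real n ^ 3 * G^2)" .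
  have E: "perm_expect n (\<lambda>\<sigma>. (X_perm n \<eta> a b \<sigma>)^2) \<le> (\<eta> * L)^2 * real n ^ 3 * G^2"
    unfolding perm_expect_def using T Npos by (simp add: divide_le_eq mult.commute)
  have ln2: "ln (1/2::real) \<le> 1/2 - 1" by (rule ln_le_minus_one) simp
  hence "ln (2::real) \<ge> 1/2" by (simp add: ln_div)
  moreover have "ln (2::real) \<le> ln (2 * real n)" using n by simp
  ultimately have l: "1 \<le> 5 * ln (2 * real n)" by linarith
  have nn: "0 \<le> (\<eta> * L)^2 * real n ^ 3 * G^2" by simp
  have "(\<eta> * L)^2 * real n ^ 3 * G^2 \<le> (\<eta> * L)^2 * real n ^ 3 * G^2 * (5 * ln (2 * real n))"
    using mult_left_mono[OF l nn] by simp
  also have "\<dots> = 5 * \<eta>^2 * real n ^ 3 * L^2 * G^2 * ln (2 * real n)"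
    by (simp add: power_mult_distrib mult_ac)
  finally show ?thesis using E by linarith
qed

end
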